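(* Let $0<s_1<s_2<1$, $2s_1<d<\frac{2s_1s_2}{s_2-s_1}$, assume $g$ satisfies $(G_1)$–$(G_3)$, and fix $\lambda>0$. Then there exists a constant $M>0$ such that every critical point $u\in H^{s_1,s_2}(\mathbb{R}^d)\setminus\{0\}$ of $I_\lambda$ satisfies $\|u\|\ge M$ (the constant $M$ does not depend on $u$).
   Context: For $s\in(0,1)$, $|\nabla_s u|_2^2=\int_{\mathbb{R}^d\times\mathbb{R}^d}\frac{|u(x)-u(y)|^2}{|x-y|^{d+2s}}dx\,dy$; $|\cdot|_p$ is the $L^p(\mathbb{R}^d)$ norm; $H^{s_1,s_2}(\mathbb{R}^d)=\{u\in L^2(\mathbb{R}^d):|\nabla_{s_1}u|_2<\infty,\ |\nabla_{s_2}u|_2<\infty\}$ with norm $\|u\|^2=|\nabla_{s_1}u|_2^2+|\nabla_{s_2}u|_2^2+|u|_2^2$. $g:\mathbb{R}\to\mathbb{R}$, $G(s)=\int_0^sg$, $\widetilde G(s)=\frac12g(s)s-G(s)$. $(G_1)$: $g$ continuous, odd. $(G_2)$: there exist $\alpha,\beta$ with $2+\frac{4s_2}{d}<\alpha<\beta<\frac{2d}{d-2s_1}$ and $\alpha G(s)\le g(s)s\le\beta G(s)$ for all $s$. $(G_3)$: $\widetilde G'$ exists and $\widetilde G'(s)s\ge\alpha\widetilde G(s)$ for all $s$. $I_\lambda(u)=\frac12|\nabla_{s_1}u|_2^2+\frac12|\nabla_{s_2}u|_2^2+\frac\lambda2|u|_2^2-\int_{\mathbb{R}^d}G(u)dx$.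 *)

theory Defs
  imports "HOL-Analysis.Analysis"
begin

definition gagliardo_sq :: "real \<Rightarrow> ('a::euclidean_space \<Rightarrow> real) \<Rightarrow> ennreal" where
  "gagliardo_sq s u =
     (\<integral>\<^sup>+ p. ennreal ((u (fst p) - u (snd p))\<^sup>2 / norm (fst p - snd p) powr (real DIM('a) + 2 * s))
        \<partial>(lborel \<Otimes>\<^sub>M lborel))"

definition Hspace :: "real \<Rightarrow> real \<Rightarrow> ('a::euclidean_space \<Rightarrow> real) set" where
  "Hspace s1 s2 = {u. u \<in> borel_measurable lborel \<and> integrable lborel (\<lambda>x. (u x)\<^sup>2)
                      \<and> gagliardo_sq s1 u < \<infinity> \<and> gagliardo_sq s2 u < \<infinity>}"

definition Hnorm :: "real \<Rightarrow> real \<Rightarrow> ('a::euclidean_space \<Rightarrow> real) \<Rightarrow> real" where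
  "Hnorm s1 s2 u = sqrt (enn2real (gagliardo_sq s1 u) + enn2real (gagliardo_sq s2 u)
                          + (\<integral>x. (u x)\<^sup>2 \<partial>lborel))"

text \<open>G(s) = \<integral>_0^s g (oriented).\<close>
definition Gprim :: "(real \<Rightarrow> real) \<Rightarrow> real \<Rightarrow> real" where
  "Gprim g s = (LBINT t=0..s. g t)"

definition Gtilde :: "(real \<Rightarrow> real) \<Rightarrow> real \<Rightarrow> real" where
  "Gtilde g s = g s * s / 2 - Gprim g s"

definition Ilam :: "real \<Rightarrow> real \<Rightarrow> (real \<Rightarrow> real) \<Rightarrow> real \<Rightarrow> ('a::euclidean_space \<Rightarrow> real) \<Rightarrow> real" where
  "Ilam s1 s2 g lam u = enn2real (gagliardo_sq s1 u) / 2 + enn2real (gagliardo_sq s2 u) / 2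
     + lam / 2 * (\<integral>x. (u x)\<^sup>2 \<partial>lborel) - (\<integral>x. Gprim g (u x) \<partial>lborel)"

definition critical_point :: "real \<Rightarrow> real \<Rightarrow> (real \<Rightarrow> real) \<Rightarrow> real \<Rightarrow> ('a::euclidean_space \<Rightarrow> real) \<Rightarrow> bool" where
  "critical_point s1 s2 g lam u \<longleftrightarrow> u \<in> Hspace s1 s2 \<and>
     (\<forall>\<phi>\<in>Hspace s1 s2. ((\<lambda>t. Ilam s1 s2 g lam (\<lambda>x. u x + t * \<phi> x)) has_real_derivative 0) (at 0))"

end

theory Submission
  imports Defs
begin


lemma ball_measure:
  fixes x :: "'a::euclidean_space"
  assumes "R > 0"
  shows "emeasure lborel (ball x R) = ennreal (measure lborel (ball (0::'a) 1) * R ^ DIM('a))"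
  using content_ball_conv_unit_ball[of R x] assms emeasure_lborel_ball_finite[of x R]
  by (simp add: emeasure_eq_ennreal_measure mult.commute)

lemma weak_bound:
  fixes u :: "'a::euclidean_space \<Rightarrow> real"
  assumes u[measurable]: "u \<in> borel_measurable lborel"
    and t: "t > 0" and R: "R > 0" and s: "s > 0"
    and m: "emeasure lborel {x. t \<le> \<bar>u x\<bar>} \<le> ennreal (measure lborel (ball (0::'a) 1) * R ^ DIM('a) / 2)"
  shows "ennreal (t\<^sup>2 / R powr (real DIM('a) + 2 * s) * (measure lborel (ball (0::'a) 1) * R ^ DIM('a) / 2))
           * emeasure lborel {x. 2 * t \<le> \<bar>u x\<bar>} \<le> gagliardo_sq s u"
proof -
  define \<omega> where "\<omega> = measure lborel (ball (0::'a) 1)"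
  define e where "e = real DIM('a) + 2 * s"
  define c where "c = t\<^sup>2 / R powr e"
  define S where "S = {p::'a\<times>'a. 2 * t \<le> \<bar>u (fst p)\<bar> \<and> \<bar>u (snd p)\<bar> < t \<and> dist (fst p) (snd p) < R}"
  have e: "e > 0" using s by (simp add: e_def add_pos_nonneg)
  have pS: "Measurable.pred (lborel \<Otimes>\<^sub>M lborel) (\<lambda>p::'a\<times>'a. 2 * t \<le> \<bar>u (fst p)\<bar> \<and> \<bar>u (snd p)\<bar> < t \<and> dist (fst p) (snd p) < R)"
    by measurable
  have Smeas: "S \<in> sets (lborel \<Otimes>\<^sub>M lborel)"
    using pS unfolding S_def pred_def by (simp add: space_pair_measure)
  have pt: "ennreal c * indicator S p \<le> ennreal ((u (fst p) - u (snd p))\<^sup>2 / norm (fst p - snd p) powr e)" for p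
  proof (cases "p \<in> S")
    case True
    then have h1: "2 * t \<le> \<bar>u (fst p)\<bar>" "\<bar>u (snd p)\<bar> < t" "dist (fst p) (snd p) < R" by (auto simp: S_def)
    have "t \<le> \<bar>u (fst p) - u (snd p)\<bar>" using h1 by linarith
    then have a: "t\<^sup>2 \<le> (u (fst p) - u (snd p))\<^sup>2" using t
      by (metis abs_of_pos order_less_le power2_abs power_mono)
    have "fst p \<noteq> snd p" using h1 t by auto
    then have n0: "norm (fst p - snd p) > 0" by simp
    have "norm (fst p - snd p) < R" using h1 by (simp add: dist_norm)
    then have b: "norm (fst p - snd p) powr e \<le> R powr e" using n0 e
      by (intro powr_mono2) auto
    have "c \<le> (u (fst p) - u (snd p))\<^sup>2 / norm (fst p - snd p) powr e"
      unfolding c_def using a b n0 R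
      by (intro frac_le) auto
    then show ?thesis using True by (simp add: ennreal_leI)
  qed (simp)
  have G1: "ennreal c * emeasure (lborel \<Otimes>\<^sub>M lborel) S \<le> gagliardo_sq s u"
  proof -
    have "(\<integral>\<^sup>+p. ennreal c * indicator S p \<partial>(lborel \<Otimes>\<^sub>M lborel)) \<le> gagliardo_sq s u"
      unfolding gagliardo_sq_def e_def[symmetric] by (rule nn_integral_mono) (rule pt)
    then show ?thesis using Smeas by (simp add: nn_integral_cmult_indicator)
  qed
  have G2: "emeasure (lborel \<Otimes>\<^sub>M lborel) S = (\<integral>\<^sup>+x. emeasure lborel (Pair x -` S) \<partial>lborel)"
    using Smeas by (rule lborel.emeasure_pair_measure_alt)
  have G3: "(\<integral>\<^sup>+x. ennreal (\<omega> * R ^ DIM('a) / 2) * indicator {x. 2 * t \<le> \<bar>u x\<bar>} x \<partial>lborel) \<le> (\<integral>\<^sup>+x. emeasure lborel (Pair x -` S) \<partial>lborel)"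
  proof (rule nn_integral_mono)
    fix x :: 'a
    show "ennreal (\<omega> * R ^ DIM('a) / 2) * indicator {x. 2 * t \<le> \<bar>u x\<bar>} x \<le> emeasure lborel (Pair x -` S)"
    proof (cases "2 * t \<le> \<bar>u x\<bar>")
      case True
      have PS: "Pair x -` S = {y. \<bar>u y\<bar> < t} \<inter> ball x R"
        using True by (auto simp: S_def)
      have Fm: "{y. \<bar>u y\<bar> < t} \<inter> ball x R \<in> sets lborel" by measurable
      have Cm: "{y. t \<le> \<bar>u y\<bar>} \<in> sets lborel" by measurable
      have sub: "ball x R \<subseteq> ({y. \<bar>u y\<bar> < t} \<inter> ball x R) \<union> {y. t \<le> \<bar>u y\<bar>}" by auto
      have "ennreal (\<omega> * R ^ DIM('a)) = emeasure lborel (ball x R)"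
        using ball_measure[OF R, of x] by (simp add: \<omega>_def)
      also have "\<dots> \<le> emeasure lborel (({y. \<bar>u y\<bar> < t} \<inter> ball x R) \<union> {y. t \<le> \<bar>u y\<bar>})"
        by (rule emeasure_mono[OF sub]) (use Fm Cm in auto)
      also have "\<dots> \<le> emeasure lborel ({y. \<bar>u y\<bar> < t} \<inter> ball x R) + emeasure lborel {y. t \<le> \<bar>u y\<bar>}"
        by (rule emeasure_subadditive) (use Fm Cm in auto)
      also have "\<dots> \<le> emeasure lborel ({y. \<bar>u y\<bar> < t} \<inter> ball x R) + ennreal (\<omega> * R ^ DIM('a) / 2)"
        using m by (simp add: \<omega>_def add_left_mono)
      finally have ineq: "ennreal (\<omega> * R ^ DIM('a)) \<le> emeasure lborel ({y. \<bar>u y\<bar> < t} \<inter> ball x R) + ennreal (\<omega> * R ^ DIM('a) / 2)" .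
      have om: "\<omega> \<ge> 0" by (simp add: \<omega>_def)
      have "ennreal (\<omega> * R ^ DIM('a)) = ennreal (\<omega> * R ^ DIM('a) / 2) + ennreal (\<omega> * R ^ DIM('a) / 2)"
        using om R by (simp add: ennreal_plus[symmetric] del: ennreal_plus)
      with ineq have "ennreal (\<omega> * R ^ DIM('a) / 2) \<le> emeasure lborel ({y. \<bar>u y\<bar> < t} \<inter> ball x R)"
        using ennreal_add_left_cancel_le[of "ennreal (\<omega> * R ^ DIM('a) / 2)"] by (simp add: add.commute)
      then show ?thesis using True PS by simp
    qed simp
  qed
  have G4: "(\<integral>\<^sup>+x. ennreal (\<omega> * R ^ DIM('a) / 2) * indicator {x. 2 * t \<le> \<bar>u x\<bar>} x \<partial>lborel)
     = ennreal (\<omega> * R ^ DIM('a) / 2) * emeasure lborel {x. 2 * t \<le> \<bar>u x\<bar>}"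
    by (rule nn_integral_cmult_indicator) measurable
  have "ennreal c * (ennreal (\<omega> * R ^ DIM('a) / 2) * emeasure lborel {x. 2 * t \<le> \<bar>u x\<bar>}) \<le> gagliardo_sq s u"
  proof -
    have "ennreal c * (ennreal (\<omega> * R ^ DIM('a) / 2) * emeasure lborel {x. 2 * t \<le> \<bar>u x\<bar>})
       \<le> ennreal c * emeasure (lborel \<Otimes>\<^sub>M lborel) S"
      unfolding G2 G4[symmetric] by (rule mult_left_mono[OF G3]) simp
    then show ?thesis using G1 by (rule order_trans)
  qed
  then show ?thesis
  proof -
    assume le: "ennreal c * (ennreal (\<omega> * R ^ DIM('a) / 2) * emeasure lborel {x. 2 * t \<le> \<bar>u x\<bar>}) \<le> gagliardo_sq s u"
    have eq: "ennreal (t\<^sup>2 / R powr (real DIM('a) + 2 * s) * (\<omega> * R ^ DIM('a) / 2)) = ennreal c * ennreal (\<omega> * R ^ DIM('a) / 2)"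
      unfolding c_def e_def using R by (intro ennreal_mult) (auto simp: \<omega>_def)
    show ?thesis unfolding \<omega>_def[symmetric] eq mult.assoc by (rule le)
  qed
qed


lemma markov_pow:
  fixes u :: "'a::euclidean_space \<Rightarrow> real"
  assumes u[measurable]: "u \<in> borel_measurable lborel" and t: "t > 0" and p: "p \<ge> 0"
  shows "ennreal (t powr p) * emeasure lborel {x. t \<le> \<bar>u x\<bar>} \<le> (\<integral>\<^sup>+x. ennreal (\<bar>u x\<bar> powr p) \<partial>lborel)"
proof -
  have "ennreal (t powr p) * emeasure lborel {x. t \<le> \<bar>u x\<bar>} = (\<integral>\<^sup>+x. ennreal (t powr p) * indicator {x. t \<le> \<bar>u x\<bar>} x \<partial>lborel)"
    by (rule nn_integral_cmult_indicator[symmetric]) measurable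
  also have "\<dots> \<le> (\<integral>\<^sup>+x. ennreal (\<bar>u x\<bar> powr p) \<partial>lborel)"
  proof (rule nn_integral_mono)
    fix x show "ennreal (t powr p) * indicator {x. t \<le> \<bar>u x\<bar>} x \<le> ennreal (\<bar>u x\<bar> powr p)"
      using t p by (cases "t \<le> \<bar>u x\<bar>") (auto intro!: ennreal_leI powr_mono2)
  qed
  finally show ?thesis .
qed

lemma one_dim_layer:
  assumes p: "p > 0" and c: "c \<ge> 0"
  shows "(\<integral>\<^sup>+\<tau>. ennreal (p * \<tau> powr (p - 1)) * (if 0 \<le> \<tau> \<and> \<tau> \<le> c then 1 else 0) \<partial>lborel) = ennreal (c powr p)"
proof -
  have h: "((\<lambda>\<tau>. \<tau> powr (p - 1)) has_integral (c powr (p - 1 + 1) / (p - 1 + 1))) {0..c}"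
    using p c by (intro has_integral_powr_from_0) auto
  have h2: "((\<lambda>\<tau>. p * \<tau> powr (p - 1)) has_integral (c powr p)) {0..c}"
    using has_integral_mult_right[OF h, of p] p by simp
  have "(\<integral>\<^sup>+\<tau>. ennreal (p * \<tau> powr (p - 1)) * indicator {0..c} \<tau> \<partial>lborel) = ennreal (c powr p)"
    by (rule nn_integral_has_integral_lebesgue'[OF _ h2]) (use p in auto)
  moreover have "(\<lambda>\<tau>. ennreal (p * \<tau> powr (p - 1)) * (if 0 \<le> \<tau> \<and> \<tau> \<le> c then 1 else 0))
     = (\<lambda>\<tau>. ennreal (p * \<tau> powr (p - 1)) * indicator {0..c} \<tau>)"
    by (auto simp: indicator_def)
  ultimately show ?thesis by simp
qed

lemma layer_cake:
  fixes u :: "'a::euclidean_space \<Rightarrow> real"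
  assumes u[measurable]: "u \<in> borel_measurable lborel" and p: "p > 0"
  shows "(\<integral>\<^sup>+x. ennreal (\<bar>u x\<bar> powr p) \<partial>lborel)
     = (\<integral>\<^sup>+\<tau>. ennreal (p * \<tau> powr (p - 1)) * indicator {0..} \<tau> * emeasure lborel {x. \<tau> \<le> \<bar>u x\<bar>} \<partial>lborel)"
proof -
  define f where "f = (\<lambda>(x::'a) (\<tau>::real). ennreal (p * \<tau> powr (p - 1)) * (if 0 \<le> \<tau> \<and> \<tau> \<le> \<bar>u x\<bar> then 1 else 0))"
  have fm: "case_prod f \<in> borel_measurable (lborel \<Otimes>\<^sub>M lborel)"
    unfolding f_def by measurable
  have "(\<integral>\<^sup>+x. ennreal (\<bar>u x\<bar> powr p) \<partial>lborel) = (\<integral>\<^sup>+x. (\<integral>\<^sup>+\<tau>. f x \<tau> \<partial>lborel) \<partial>lborel)"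
    unfolding f_def using p by (simp add: one_dim_layer)
  also have "\<dots> = (\<integral>\<^sup>+\<tau>. (\<integral>\<^sup>+x. f x \<tau> \<partial>lborel) \<partial>lborel)"
    by (rule lborel_pair.Fubini'[OF fm, symmetric])
  also have "\<dots> = (\<integral>\<^sup>+\<tau>. ennreal (p * \<tau> powr (p - 1)) * indicator {0..} \<tau> * emeasure lborel {x. \<tau> \<le> \<bar>u x\<bar>} \<partial>lborel)"
  proof (rule nn_integral_cong)
    fix \<tau> :: real
    show "(\<integral>\<^sup>+x. f x \<tau> \<partial>lborel) = ennreal (p * \<tau> powr (p - 1)) * indicator {0..} \<tau> * emeasure lborel {x. \<tau> \<le> \<bar>u x\<bar>}"
    proof (cases "0 \<le> \<tau>")
      case True
      have "(\<integral>\<^sup>+x. f x \<tau> \<partial>lborel) = (\<integral>\<^sup>+x. ennreal (p * \<tau> powr (p - 1)) * indicator {x. \<tau> \<le> \<bar>u x\<bar>} x \<partial>lborel)"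
        unfolding f_def using True by (intro nn_integral_cong) (auto simp: indicator_def)
      also have "\<dots> = ennreal (p * \<tau> powr (p - 1)) * emeasure lborel {x. \<tau> \<le> \<bar>u x\<bar>}"
        by (rule nn_integral_cmult_indicator) measurable
      finally show ?thesis using True by simp
    next
      case False
      then show ?thesis unfolding f_def by simp
    qed
  qed
  finally show ?thesis .
qed


lemma ennreal_div_bound:
  assumes "a > 0" "b \<ge> 0" "ennreal a * x \<le> ennreal b"
  shows "x \<le> ennreal (b / a)"
proof -
  have "x = ennreal (1 / a) * (ennreal a * x)"
    using assms(1) by (simp add: mult.assoc[symmetric] ennreal_mult[symmetric] del: ennreal_mult')
  also have "\<dots> \<le> ennreal (1 / a) * ennreal b"
    by (rule mult_left_mono[OF assms(3)]) simp
  also have "\<dots> = ennreal (b / a)"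
    using assms by (simp add: ennreal_mult[symmetric] del: ennreal_mult')
  finally show ?thesis .
qed

lemma int_pow_0a:
  assumes a: "a > 0" and r: "r > -1" and K: "K \<ge> 0"
  shows "(\<integral>\<^sup>+\<tau>. ennreal (K * \<tau> powr r) * indicator {0..a} \<tau> \<partial>lborel) = ennreal (K * (a powr (r + 1) / (r + 1)))"
proof -
  have h: "((\<lambda>\<tau>. \<tau> powr r) has_integral (a powr (r + 1) / (r + 1))) {0..a}"
    using a r by (intro has_integral_powr_from_0) auto
  have h2: "((\<lambda>\<tau>. K * \<tau> powr r) has_integral (K * (a powr (r + 1) / (r + 1)))) {0..a}"
    using has_integral_mult_right[OF h, of K] by simp
  show ?thesis
    by (rule nn_integral_has_integral_lebesgue'[OF _ h2]) (use K in auto)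
qed

lemma int_pow_ainf:
  assumes a: "a > 0" and r: "r < -1" and K: "K \<ge> 0"
  shows "(\<integral>\<^sup>+\<tau>. ennreal (K * \<tau> powr r) * indicator {a..} \<tau> \<partial>lborel) = ennreal (K * (a powr (r + 1) / (- (r + 1))))"
proof -
  have h: "((\<lambda>\<tau>. \<tau> powr r) has_integral (-(a powr (r + 1)) / (r + 1))) {a..}"
    using a r by (intro has_integral_powr_to_inf) auto
  have h2: "((\<lambda>\<tau>. K * \<tau> powr r) has_integral (K * (a powr (r + 1) / (- (r + 1))))) {a..}"
  proof -
    have "-(K * a powr (r + 1) / (r + 1)) = K * (a powr (r + 1) / (- (r + 1)))"
      by (simp add: minus_divide_right)
    then show ?thesis using has_integral_mult_right[OF h, of K] by simp
  qed
  show ?thesis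
    by (rule nn_integral_has_integral_lebesgue'[OF _ h2]) (use K a in auto)
qed

lemma powr_alg1:
  fixes X d s :: real
  assumes X: "X > 0" and d: "d > 0" and n: "real n = d"
  shows "(X powr (1 / d)) ^ n = X"
    and "(X powr (1 / d)) powr (d + 2 * s) = X * X powr (2 * s / d)"
proof -
  have "(X powr (1 / d)) ^ n = (X powr (1 / d)) powr (real n)"
    using X by (simp add: powr_realpow)
  also have "\<dots> = X" using d n X by (simp add: powr_powr)
  finally show "(X powr (1 / d)) ^ n = X" .
  show "(X powr (1 / d)) powr (d + 2 * s) = X * X powr (2 * s / d)"
  proof -
    have "(X powr (1 / d)) powr (d + 2 * s) = X powr (1 + 2 * s / d)"
      using d by (simp add: powr_powr add_divide_distrib)
    also have "\<dots> = X * X powr (2 * s / d)" using X by (simp add: powr_add)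
    finally show ?thesis .
  qed
qed

lemma field_aux:
  fixes B P Q T t \<omega> :: real
  assumes "T > 0" "t > 0" "\<omega> > 0"
  shows "2 * B * (P * (Q / T)) / (t\<^sup>2 * \<omega>) = (2 * P / \<omega>) * (B * Q) * (inverse T / t\<^sup>2)"
  using assms by (simp add: field_simps)

lemma powr_alg2:
  fixes A B \<omega> t p \<theta> :: real
  assumes "A > 0" "B > 0" "\<omega> > 0" "t > 0"
  shows "2 * B * (2 * A * B powr (p / 2) / (\<omega> * t powr p)) powr \<theta> / (t\<^sup>2 * \<omega>)
       = (2 * (2 * A / \<omega>) powr \<theta> / \<omega>) * B powr ((2 + \<theta> * p) / 2) * t powr (- (2 + \<theta> * p))"
proof -
  have e0: "2 * A * B powr (p / 2) / (\<omega> * t powr p) = (2 * A / \<omega>) * (B powr (p / 2) / t powr p)"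
    by simp
  have e1: "(2 * A * B powr (p / 2) / (\<omega> * t powr p)) powr \<theta> = (2 * A / \<omega>) powr \<theta> * (B powr (\<theta> * p / 2) / t powr (\<theta> * p))"
    unfolding e0 using assms by (simp add: powr_mult powr_divide powr_powr mult_ac)
  have e2: "B powr ((2 + \<theta> * p) / 2) = B * B powr (\<theta> * p / 2)"
    using assms by (simp add: add_divide_distrib powr_add)
  have e3: "t powr (- (2 + \<theta> * p)) = inverse (t powr (\<theta> * p)) / t\<^sup>2"
  proof -
    have "t powr (2 + \<theta> * p) = t\<^sup>2 * t powr (\<theta> * p)"
      using assms by (simp add: powr_add powr_numeral)
    then have "t powr (- (2 + \<theta> * p)) = inverse (t\<^sup>2 * t powr (\<theta> * p))"
      by (metis powr_minus)
    then show ?thesis by (simp add: divide_inverse mult_ac)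
  qed
  show ?thesis unfolding e1 e2 e3 using assms by (intro field_aux) auto
qed


lemma step_embed:
  fixes s p p' A :: real
  assumes s: "s > 0" and p: "p \<ge> 2" and A: "A > 0"
    and p'1: "2 < p'" and p'2: "p' < 2 + (2 * s / real DIM('a)) * p"
    and hyp: "\<And>(u::'a::euclidean_space \<Rightarrow> real) B. u \<in> borel_measurable lborel \<Longrightarrow> B > 0 \<Longrightarrow>
        (\<integral>\<^sup>+x. ennreal (\<bar>u x\<bar> powr 2) \<partial>lborel) \<le> ennreal B \<Longrightarrow> gagliardo_sq s u \<le> ennreal B \<Longrightarrow>
        (\<integral>\<^sup>+x. ennreal (\<bar>u x\<bar> powr p) \<partial>lborel) \<le> ennreal (A * B powr (p / 2))"
  shows "\<exists>A'>0. \<forall>(u::'a \<Rightarrow> real) B. u \<in> borel_measurable lborel \<and> B > 0 \<and>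
        (\<integral>\<^sup>+x. ennreal (\<bar>u x\<bar> powr 2) \<partial>lborel) \<le> ennreal B \<and> gagliardo_sq s u \<le> ennreal B \<longrightarrow>
        (\<integral>\<^sup>+x. ennreal (\<bar>u x\<bar> powr p') \<partial>lborel) \<le> ennreal (A' * B powr (p' / 2))"
proof -
  define d where "d = real DIM('a)"
  define \<omega> where "\<omega> = measure lborel (ball (0::'a) 1)"
  define \<theta> where "\<theta> = 2 * s / d"
  define q where "q = 2 + \<theta> * p"
  define C0 where "C0 = 2 * (2 * A / \<omega>) powr \<theta> / \<omega>"
  define C1 where "C1 = C0 * 2 powr q"
  define A' where "A' = p' / (p' - 2) + p' * C1 / (q - p')"
  have d: "d > 0" unfolding d_def by simp
  have om: "\<omega> > 0" unfolding \<omega>_def using content_ball_pos[of 1 "0::'a"] by simp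
  have q: "p' < q" using p'2 unfolding q_def \<theta>_def d_def by simp
  have C0: "C0 > 0" unfolding C0_def using om A by simp
  have C1: "C1 > 0" unfolding C1_def using C0 by simp
  have A': "A' > 0" unfolding A'_def using p'1 q C1 by (intro add_pos_pos) auto
  show ?thesis
  proof (intro exI[of _ A'] conjI allI impI A')
    fix u :: "'a \<Rightarrow> real" and B :: real
    assume H: "u \<in> borel_measurable lborel \<and> B > 0 \<and>
        (\<integral>\<^sup>+x. ennreal (\<bar>u x\<bar> powr 2) \<partial>lborel) \<le> ennreal B \<and> gagliardo_sq s u \<le> ennreal B"
    then have u[measurable]: "u \<in> borel_measurable lborel" and B: "B > 0"
      and N2: "(\<integral>\<^sup>+x. ennreal (\<bar>u x\<bar> powr 2) \<partial>lborel) \<le> ennreal B"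
      and gB: "gagliardo_sq s u \<le> ennreal B" by auto
    have Np: "(\<integral>\<^sup>+x. ennreal (\<bar>u x\<bar> powr p) \<partial>lborel) \<le> ennreal (A * B powr (p / 2))"
      using hyp[OF u B N2 gB] .
    define m where "m = (\<lambda>t. emeasure lborel {x. t \<le> \<bar>u x\<bar>})"
    have m2: "m t \<le> ennreal (B / t powr 2)" if t: "t > 0" for t
    proof (rule ennreal_div_bound)
      show "ennreal (t powr 2) * m t \<le> ennreal B"
        unfolding m_def using markov_pow[OF u t, of 2] N2 by simp
    qed (use t B in auto)
    have mp: "m t \<le> ennreal (A * B powr (p / 2) / t powr p)" if t: "t > 0" for t
    proof (rule ennreal_div_bound)
      show "ennreal (t powr p) * m t \<le> ennreal (A * B powr (p / 2))"
        unfolding m_def using markov_pow[OF u t, of p] Np p by simp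
    qed (use t A B in auto)
    have mq: "m (2 * t) \<le> ennreal (C0 * B powr (q / 2) * t powr (- q))" if t: "t > 0" for t
    proof -
      define X where "X = 2 * A * B powr (p / 2) / (\<omega> * t powr p)"
      define R where "R = X powr (1 / d)"
      have X: "X > 0" unfolding X_def using A B om t by simp
      have R: "R > 0" unfolding R_def using X by simp
      have RD: "R ^ DIM('a) = X" unfolding R_def using powr_alg1(1)[OF X d, of "DIM('a)"] d_def by simp
      have Re: "R powr (real DIM('a) + 2 * s) = X * X powr \<theta>"
        unfolding R_def \<theta>_def using powr_alg1(2)[OF X d, of "DIM('a)" s] d_def by simp
      have mt: "emeasure lborel {x. t \<le> \<bar>u x\<bar>} \<le> ennreal (measure lborel (ball (0::'a) 1) * R ^ DIM('a) / 2)"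
      proof -
        have "\<omega> * X / 2 = A * B powr (p / 2) / t powr p" unfolding X_def using om t by (simp add: field_simps)
        then show ?thesis using mp[OF t] unfolding m_def RD \<omega>_def[symmetric] by simp
      qed
      have W: "ennreal (t\<^sup>2 / (X * X powr \<theta>) * (\<omega> * X / 2)) * m (2 * t) \<le> ennreal B"
        using weak_bound[OF u t R s mt] gB unfolding m_def Re RD \<omega>_def[symmetric] by simp
      have k: "t\<^sup>2 / (X * X powr \<theta>) * (\<omega> * X / 2) > 0" using t X om by simp
      have "m (2 * t) \<le> ennreal (B / (t\<^sup>2 / (X * X powr \<theta>) * (\<omega> * X / 2)))"
        by (rule ennreal_div_bound[OF k _ W]) (use B in simp)
      also have "B / (t\<^sup>2 / (X * X powr \<theta>) * (\<omega> * X / 2)) = 2 * B * X powr \<theta> / (t\<^sup>2 * \<omega>)"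
        using X om t by (simp add: field_simps)
      also have "\<dots> = C0 * B powr (q / 2) * t powr (- q)"
        unfolding X_def C0_def q_def by (rule powr_alg2[OF A B om t])
      finally show ?thesis .
    qed
    have mq': "m \<tau> \<le> ennreal (C1 * B powr (q / 2) * \<tau> powr (- q))" if t: "\<tau> > 0" for \<tau>
    proof -
      have "m \<tau> = m (2 * (\<tau> / 2))" by simp
      also have "\<dots> \<le> ennreal (C0 * B powr (q / 2) * (\<tau> / 2) powr (- q))" using mq[of "\<tau>/2"] t by simp
      also have "(\<tau> / 2) powr (- q) = 2 powr q * \<tau> powr (- q)"
      proof -
        have "(\<tau> / 2) powr (- q) = \<tau> powr (- q) / 2 powr (- q)" using t by (simp add: powr_divide)
        moreover have "2 powr (- q) = inverse (2 powr q)" by (rule powr_minus)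
        ultimately show ?thesis by (simp only: divide_inverse inverse_inverse_eq mult.commute)
      qed
      also have "C0 * B powr (q / 2) * (2 powr q * \<tau> powr (- q)) = C1 * B powr (q / 2) * \<tau> powr (- q)"
        unfolding C1_def by (simp only: mult_ac)
      finally show ?thesis .
    qed
    define a where "a = B powr (1 / 2)"
    have a: "a > 0" unfolding a_def using B by simp
    have "(\<integral>\<^sup>+x. ennreal (\<bar>u x\<bar> powr p') \<partial>lborel)
       = (\<integral>\<^sup>+\<tau>. ennreal (p' * \<tau> powr (p' - 1)) * indicator {0..} \<tau> * m \<tau> \<partial>lborel)"
      unfolding m_def by (rule layer_cake[OF u]) (use p'1 in simp)
    also have "\<dots> \<le> (\<integral>\<^sup>+\<tau>. ennreal (p' * B * \<tau> powr (p' - 3)) * indicator {0..a} \<tau>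
                     + ennreal (p' * C1 * B powr (q / 2) * \<tau> powr (p' - 1 - q)) * indicator {a..} \<tau> \<partial>lborel)"
    proof (rule nn_integral_mono)
      fix \<tau> :: real
      show "ennreal (p' * \<tau> powr (p' - 1)) * indicator {0..} \<tau> * m \<tau>
         \<le> ennreal (p' * B * \<tau> powr (p' - 3)) * indicator {0..a} \<tau>
           + ennreal (p' * C1 * B powr (q / 2) * \<tau> powr (p' - 1 - q)) * indicator {a..} \<tau>"
      proof (cases "\<tau> > 0")
        case False
        then show ?thesis by (cases "\<tau> = 0") auto
      next
        case t: True
        show ?thesis
        proof (cases "\<tau> \<le> a")
          case True
          have "ennreal (p' * \<tau> powr (p' - 1)) * indicator {0..} \<tau> * m \<tau> = ennreal (p' * \<tau> powr (p' - 1)) * m \<tau>"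
            using t by simp
          also have "\<dots> \<le> ennreal (p' * \<tau> powr (p' - 1)) * ennreal (B / \<tau> powr 2)"
            by (rule mult_left_mono[OF m2[OF t]]) simp
          also have "\<dots> = ennreal (p' * B * \<tau> powr (p' - 3))"
          proof -
            have "\<tau> powr (p' - 3) = \<tau> powr (p' - 1) / \<tau> powr 2"
            proof -
              have "\<tau> powr (p' - 3) = \<tau> powr ((p' - 1) - 2)" by (simp add: algebra_simps)
              also have "\<dots> = \<tau> powr (p' - 1) / \<tau> powr 2" by (rule powr_diff)
              finally show ?thesis .
            qed
            then show ?thesis using t p'1 B by (simp add: ennreal_mult[symmetric] del: ennreal_mult')
          qed
          also have "\<dots> \<le> ennreal (p' * B * \<tau> powr (p' - 3)) * indicator {0..a} \<tau>
           + ennreal (p' * C1 * B powr (q / 2) * \<tau> powr (p' - 1 - q)) * indicator {a..} \<tau>"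
            using True t by simp
          finally show ?thesis .
        next
          case False
          have "ennreal (p' * \<tau> powr (p' - 1)) * indicator {0..} \<tau> * m \<tau> = ennreal (p' * \<tau> powr (p' - 1)) * m \<tau>"
            using t by simp
          also have "\<dots> \<le> ennreal (p' * \<tau> powr (p' - 1)) * ennreal (C1 * B powr (q / 2) * \<tau> powr (- q))"
            by (rule mult_left_mono[OF mq'[OF t]]) simp
          also have "\<dots> = ennreal (p' * C1 * B powr (q / 2) * \<tau> powr (p' - 1 - q))"
          proof -
            have "\<tau> powr (p' - 1 - q) = \<tau> powr (p' - 1) * \<tau> powr (- q)"
              using t by (simp add: powr_add[symmetric])
            then show ?thesis using t p'1 B C1 by (simp add: ennreal_mult[symmetric] mult_ac del: ennreal_mult')
          qed
          also have "\<dots> \<le> ennreal (p' * B * \<tau> powr (p' - 3)) * indicator {0..a} \<tau>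
           + ennreal (p' * C1 * B powr (q / 2) * \<tau> powr (p' - 1 - q)) * indicator {a..} \<tau>"
            using False t by simp
          finally show ?thesis .
        qed
      qed
    qed
    also have "\<dots> = (\<integral>\<^sup>+\<tau>. ennreal (p' * B * \<tau> powr (p' - 3)) * indicator {0..a} \<tau> \<partial>lborel)
                  + (\<integral>\<^sup>+\<tau>. ennreal (p' * C1 * B powr (q / 2) * \<tau> powr (p' - 1 - q)) * indicator {a..} \<tau> \<partial>lborel)"
      by (rule nn_integral_add) auto
    also have "\<dots> = ennreal (p' * B * (a powr (p' - 3 + 1) / (p' - 3 + 1)))
                  + ennreal (p' * C1 * B powr (q / 2) * (a powr (p' - 1 - q + 1) / (- (p' - 1 - q + 1))))"
      using a p'1 q B C1 by (simp add: int_pow_0a int_pow_ainf)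
    also have "\<dots> = ennreal (A' * B powr (p' / 2))"
    proof -
      have e1: "B * a powr (p' - 3 + 1) = B powr (p' / 2)"
      proof -
        have "a powr (p' - 3 + 1) = B powr ((p' - 2) / 2)" unfolding a_def by (simp add: powr_powr)
        moreover have "B * B powr ((p' - 2) / 2) = B powr (p' / 2)"
          using B by (simp add: powr_mult_base diff_divide_distrib)
        ultimately show ?thesis by simp
      qed
      have e2: "B powr (q / 2) * a powr (p' - 1 - q + 1) = B powr (p' / 2)"
      proof -
        have "a powr (p' - 1 - q + 1) = B powr ((p' - q) / 2)" unfolding a_def by (simp add: powr_powr)
        moreover have "B powr (q / 2) * B powr ((p' - q) / 2) = B powr (p' / 2)"
          by (simp add: powr_add[symmetric] diff_divide_distrib)
        ultimately show ?thesis by simp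
      qed
      have f1: "p' * B * (a powr (p' - 3 + 1) / (p' - 3 + 1)) = p' / (p' - 2) * B powr (p' / 2)"
        using e1 by (simp add: field_simps)
      have f2: "p' * C1 * B powr (q / 2) * (a powr (p' - 1 - q + 1) / (- (p' - 1 - q + 1)))
                   = p' * C1 / (q - p') * B powr (p' / 2)"
        using e2 by (simp add: field_simps)
      have nn1: "0 \<le> p' / (p' - 2) * B powr (p' / 2)" using p'1 by simp
      have nn2: "0 \<le> p' * C1 / (q - p') * B powr (p' / 2)" using p'1 q C1 by simp
      show ?thesis unfolding f1 f2 A'_def distrib_right by (rule ennreal_plus[symmetric, OF nn1 nn2])
    qed
    finally show "(\<integral>\<^sup>+x. ennreal (\<bar>u x\<bar> powr p') \<partial>lborel) \<le> ennreal (A' * B powr (p' / 2))" .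
  qed
qed


definition goodp :: "'a::euclidean_space itself \<Rightarrow> real \<Rightarrow> real \<Rightarrow> bool" where
  "goodp T s r \<longleftrightarrow> (\<exists>A>0. \<forall>(u::'a \<Rightarrow> real) B. u \<in> borel_measurable lborel \<and> B > 0 \<and>
        (\<integral>\<^sup>+x. ennreal (\<bar>u x\<bar> powr 2) \<partial>lborel) \<le> ennreal B \<and> gagliardo_sq s u \<le> ennreal B \<longrightarrow>
        (\<integral>\<^sup>+x. ennreal (\<bar>u x\<bar> powr r) \<partial>lborel) \<le> ennreal (A * B powr (r / 2)))"

lemma goodp_2: "goodp (TYPE('a::euclidean_space)) s 2"
  unfolding goodp_def by (intro exI[of _ 1]) auto

lemma goodp_step:
  assumes "goodp (TYPE('a::euclidean_space)) s p" "s > 0" "p \<ge> 2" "2 < p'" "p' < 2 + (2 * s / real DIM('a)) * p"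
  shows "goodp (TYPE('a)) s p'"
proof -
  from assms(1) obtain A where A: "A > 0" and H: "\<forall>(u::'a \<Rightarrow> real) B. u \<in> borel_measurable lborel \<and> B > 0 \<and>
        (\<integral>\<^sup>+x. ennreal (\<bar>u x\<bar> powr 2) \<partial>lborel) \<le> ennreal B \<and> gagliardo_sq s u \<le> ennreal B \<longrightarrow>
        (\<integral>\<^sup>+x. ennreal (\<bar>u x\<bar> powr p) \<partial>lborel) \<le> ennreal (A * B powr (p / 2))"
    unfolding goodp_def by blast
  show ?thesis unfolding goodp_def
    by (rule step_embed[OF assms(2,3) A assms(4,5)]) (use H in blast)
qed

lemma goodp_all:
  assumes s: "s > 0" and sd: "2 * s < real DIM('a::euclidean_space)"
    and r1: "2 \<le> r" and r2: "r < 2 * real DIM('a) / (real DIM('a) - 2 * s)"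
  shows "goodp (TYPE('a)) s r"
proof -
  define d where "d = real DIM('a)"
  define \<theta> where "\<theta> = 2 * s / d"
  define P where "P = 2 / (1 - \<theta>)"
  define \<rho> where "\<rho> = (1 + \<theta>) / 2"
  define c where "c = (\<lambda>n::nat. P - (P - 2) * \<rho> ^ n)"
  have d: "d > 0" unfolding d_def by simp
  have th0: "\<theta> > 0" unfolding \<theta>_def using s d by simp
  have th1: "\<theta> < 1" unfolding \<theta>_def using sd d by (simp add: d_def)
  have Pfix: "2 + \<theta> * P = P" unfolding P_def using th1 by (simp add: field_simps)
  have P2: "P > 2" unfolding P_def using th0 th1 by (simp add: field_simps)
  have rP: "r < P"
  proof -
    have "2 * d / (d - 2 * s) = P" unfolding P_def \<theta>_def using d sd by (simp add: d_def field_simps)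
    then show ?thesis using r2 d_def by simp
  qed
  have rho0: "\<rho> > 0" "\<rho> < 1" unfolding \<rho>_def using th0 th1 by auto
  have c2: "c n \<ge> 2" for n
  proof -
    have "\<rho> ^ n \<le> 1" using rho0 by (simp add: power_le_one)
    then have "(P - 2) * \<rho> ^ n \<le> P - 2" using P2 by (simp add: mult_left_le)
    then show ?thesis unfolding c_def by simp
  qed
  have cstep: "c (Suc n) < 2 + \<theta> * c n" for n
  proof -
    have gen: "2 + \<theta> * (P - (P - 2) * x) - (P - (P - 2) * (\<rho> * x)) = (P - 2) * x * ((1 - \<theta>) / 2)" for x
    proof -
      have "2 + \<theta> * (P - (P - 2) * x) - (P - (P - 2) * (\<rho> * x)) = (2 + \<theta> * P - P) + (P - 2) * x * (\<rho> - \<theta>)"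
        by (simp add: algebra_simps)
      also have "\<dots> = (P - 2) * x * ((1 - \<theta>) / 2)" using Pfix unfolding \<rho>_def by (simp add: field_simps)
      finally show ?thesis .
    qed
    have "2 + \<theta> * c n - c (Suc n) = (P - 2) * \<rho> ^ n * ((1 - \<theta>) / 2)"
      unfolding c_def power_Suc by (rule gen)
    moreover have "(P - 2) * \<rho> ^ n * ((1 - \<theta>) / 2) > 0" using P2 rho0 th1 by simp
    ultimately show ?thesis by simp
  qed
  have ind: "\<forall>r. 2 \<le> r \<and> r \<le> c n \<longrightarrow> goodp (TYPE('a)) s r" for n
  proof (induction n)
    case 0
    have "c 0 = 2" unfolding c_def by simp
    then show ?case using goodp_2 by (metis antisym)
  next
    case (Suc n)
    show ?case
    proof (intro allI impI)
      fix r assume r: "2 \<le> r \<and> r \<le> c (Suc n)"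
      show "goodp (TYPE('a)) s r"
      proof (cases "r \<le> c n")
        case True then show ?thesis using Suc r by blast
      next
        case False
        have g: "goodp (TYPE('a)) s (c n)" using Suc c2[of n] by blast
        show ?thesis
          by (rule goodp_step[OF g s c2]) (use False c2[of n] r cstep[of n] in \<open>auto simp: \<theta>_def d_def\<close>)
      qed
    qed
  qed
  obtain n where n: "\<rho> ^ n < (P - r) / (P - 2)"
    using real_arch_pow_inv[of "(P - r) / (P - 2)" \<rho>] rP P2 rho0 by auto
  have "(P - 2) * \<rho> ^ n < P - r" using n P2 by (simp add: field_simps)
  then have "r \<le> c n" unfolding c_def by simp
  then show ?thesis using ind r1 by blast
qed


lemma Gprim_deriv:
  assumes "continuous_on UNIV g"
  shows "(Gprim g has_real_derivative g x) (at x)"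
proof -
  define a where "a = - \<bar>x\<bar> - 1"
  define b where "b = \<bar>x\<bar> + 1"
  have eq: "Gprim g = (\<lambda>s. LBINT t=0..s. g t)" by (simp add: fun_eq_iff Gprim_def)
  have "((\<lambda>u. LBINT t=ereal 0..u. g t) has_vector_derivative g x) (at x within {a..b})"
    by (rule interval_integral_FTC2) (auto simp: a_def b_def intro: continuous_on_subset[OF assms])
  then have "((\<lambda>u. LBINT t=ereal 0..u. g t) has_vector_derivative g x) (at x within {a<..<b})"
    by (rule has_vector_derivative_within_subset) auto
  then have "((\<lambda>u. LBINT t=ereal 0..u. g t) has_vector_derivative g x) (at x)"
  proof -
    have "x \<in> {a<..<b}" unfolding a_def b_def by (simp; arith)
    then have "at x within {a<..<b} = at x" by (rule at_within_open) simp
    then show ?thesis using \<open>((\<lambda>u. LBINT t=ereal 0..u. g t) has_vector_derivative g x) (at x within {a<..<b})\<close> by simp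
  qed
  then show ?thesis unfolding eq zero_ereal_def by (simp add: has_real_derivative_iff_has_vector_derivative)
qed

lemma aux1: "(b::real) * a = 1 \<Longrightarrow> X * b * a \<le> Y \<Longrightarrow> X \<le> Y"
  by (simp add: mult.assoc)
lemma aux2: "(b::real) * a = 1 \<Longrightarrow> Y \<le> X * b * a \<Longrightarrow> Y \<le> X"
  by (simp add: mult.assoc)

lemma G_scale:
  fixes G g :: "real \<Rightarrow> real"
  assumes gd: "\<And>x. (G has_real_derivative g x) (at x)"
    and ab: "0 < \<alpha>" "\<alpha> \<le> \<beta>"
    and H: "\<And>s. \<alpha> * G s \<le> g s * s \<and> g s * s \<le> \<beta> * G s"
    and c: "c \<ge> 1"
  shows "G (c * v) \<le> c powr \<beta> * G v" and "c powr \<alpha> * G v \<le> G (c * v)"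
proof -
  have chain: "DERIV (\<lambda>x. G (x * v)) x :> g (x * v) * v" for x
  proof -
    have "((\<lambda>x. x * v) has_real_derivative v) (at x)" by (auto intro!: derivative_eq_intros)
    from DERIV_chain2[OF gd this] show ?thesis .
  qed
  have dpow: "DERIV (\<lambda>x. x powr e) x :> e * x powr (e - 1)" if "x > 0" for x e :: real
    using has_real_derivative_powr[OF that] .
  have key: "x powr e = x * x powr (e - 1)" if "x > 0" for x e :: real
  proof -
    have "x * x powr (e - 1) = x powr (1 + (e - 1))" using that by (rule powr_mult_base[OF less_imp_le])
    then show ?thesis by simp
  qed
  {
    fix \<gamma> :: real
    have "DERIV (\<lambda>x. G (x * v) * x powr (- \<gamma>)) x :> x powr (- \<gamma> - 1) * (g (x * v) * (x * v) - \<gamma> * G (x * v))"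
      if x: "x > 0" for x
    proof -
      have "DERIV (\<lambda>x. G (x * v) * x powr (- \<gamma>)) x :> g (x * v) * v * x powr (- \<gamma>) + ((- \<gamma>) * x powr (- \<gamma> - 1)) * G (x * v)"
        by (rule DERIV_mult[OF chain dpow[OF x]])
      moreover have "g (x * v) * v * x powr (- \<gamma>) + ((- \<gamma>) * x powr (- \<gamma> - 1)) * G (x * v)
          = x powr (- \<gamma> - 1) * (g (x * v) * (x * v) - \<gamma> * G (x * v))"
        using key[OF x, of "- \<gamma>"] by (simp add: algebra_simps)
      ultimately show ?thesis by simp
    qed
  } note D = this
  have c0: "c > 0" using c by simp
  have "G (c * v) * c powr (- \<beta>) \<le> G (1 * v) * 1 powr (- \<beta>)"
  proof (rule DERIV_nonpos_imp_nonincreasing[OF c])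
    fix x assume x: "1 \<le> x" "x \<le> c"
    then have xp: "x > 0" by simp
    have "x powr (- \<beta> - 1) * (g (x * v) * (x * v) - \<beta> * G (x * v)) \<le> 0"
      using H[of "x * v"] xp by (intro mult_nonneg_nonpos) auto
    then show "\<exists>y. DERIV (\<lambda>x. G (x * v) * x powr (- \<beta>)) x :> y \<and> y \<le> 0"
      using D[OF xp] by blast
  qed
  then have "G (c * v) * c powr (- \<beta>) * c powr \<beta> \<le> G v * c powr \<beta>"
    using c0 by (intro mult_right_mono) auto
  moreover have "c powr (- \<beta>) * c powr \<beta> = 1" using c0 by (simp add: powr_add[symmetric])
  ultimately show "G (c * v) \<le> c powr \<beta> * G v" by (metis aux1 mult.commute)
  have "G (1 * v) * 1 powr (- \<alpha>) \<le> G (c * v) * c powr (- \<alpha>)"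
  proof (rule DERIV_nonneg_imp_nondecreasing[OF c])
    fix x assume x: "1 \<le> x" "x \<le> c"
    then have xp: "x > 0" by simp
    have "x powr (- \<alpha> - 1) * (g (x * v) * (x * v) - \<alpha> * G (x * v)) \<ge> 0"
      using H[of "x * v"] xp by (intro mult_nonneg_nonneg) auto
    then show "\<exists>y. DERIV (\<lambda>x. G (x * v) * x powr (- \<alpha>)) x :> y \<and> y \<ge> 0"
      using D[OF xp] by blast
  qed
  then have "G v * c powr \<alpha> \<le> G (c * v) * c powr (- \<alpha>) * c powr \<alpha>"
    using c0 by (intro mult_right_mono) auto
  moreover have "c powr (- \<alpha>) * c powr \<alpha> = 1" using c0 by (simp add: powr_add[symmetric])
  ultimately show "c powr \<alpha> * G v \<le> G (c * v)" by (metis aux2 mult.commute)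
qed

lemma G_nonneg:
  assumes ab: "\<alpha> < \<beta>" and H: "\<And>s. \<alpha> * G s \<le> g s * s \<and> g s * s \<le> \<beta> * G s"
  shows "G x \<ge> (0::real)"
proof -
  have "\<alpha> * G x \<le> \<beta> * G x" using H[of x] by linarith
  then have "0 \<le> (\<beta> - \<alpha>) * G x" by (simp add: algebra_simps)
  then show ?thesis using ab by (simp add: zero_le_mult_iff)
qed

lemma inv_aux: "(P::real) > 0 \<Longrightarrow> inverse P * x \<le> K \<Longrightarrow> x \<le> K * P"
  by (simp add: field_simps)

lemma G_bound:
  fixes G g :: "real \<Rightarrow> real"
  assumes gd: "\<And>x. (G has_real_derivative g x) (at x)"
    and ab: "0 < \<alpha>" "\<alpha> < \<beta>"
    and H: "\<And>s. \<alpha> * G s \<le> g s * s \<and> g s * s \<le> \<beta> * G s"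
  shows "G v \<le> max (G 1) (G (-1)) * (\<bar>v\<bar> powr \<alpha> + \<bar>v\<bar> powr \<beta>)"
proof -
  define K where "K = max (G 1) (G (-1))"
  have Gnn: "G x \<ge> 0" for x by (rule G_nonneg[OF ab(2) H])
  have K0: "K \<ge> 0" unfolding K_def using Gnn[of 1] by simp
  have ab': "\<alpha> \<le> \<beta>" using ab by simp
  show ?thesis
  proof (cases "v = 0")
    case True
    have "\<alpha> * G 0 \<le> 0" using H[of 0] by simp
    then have "G 0 \<le> 0" using ab by (simp add: mult_le_0_iff)
    then show ?thesis using True by (simp add: K_def[symmetric])
  next
    case False
    define w where "w = sgn v"
    have vw: "v = \<bar>v\<bar> * w" unfolding w_def by (simp add: abs_mult_sgn)
    have Gw: "G w \<le> K" unfolding w_def K_def using False by (cases "v > 0") auto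
    have av: "\<bar>v\<bar> > 0" using False by simp
    show ?thesis
    proof (cases "\<bar>v\<bar> \<ge> 1")
      case True
      have "G v \<le> \<bar>v\<bar> powr \<beta> * G w"
        using G_scale(1)[OF gd ab(1) ab' H True, of w] vw by metis
      also have "\<dots> \<le> \<bar>v\<bar> powr \<beta> * K" using Gw by (intro mult_left_mono) auto
      also have "\<dots> \<le> K * (\<bar>v\<bar> powr \<alpha> + \<bar>v\<bar> powr \<beta>)" using K0 by (simp add: algebra_simps)
      finally show ?thesis by (simp add: K_def)
    next
      case False
      define c where "c = 1 / \<bar>v\<bar>"
      have c1: "c \<ge> 1" unfolding c_def using False av by simp
      have cv: "c * v = w" unfolding c_def w_def using av by (cases "v > 0") (auto simp: sgn_if)
      have "c powr \<alpha> * G v \<le> K" using G_scale(2)[OF gd ab(1) ab' H c1, of v] cv Gw by simp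
      moreover have "c powr \<alpha> = inverse (\<bar>v\<bar> powr \<alpha>)"
      proof -
        have "c powr \<alpha> = 1 powr \<alpha> / \<bar>v\<bar> powr \<alpha>" unfolding c_def by (rule powr_divide)
        then show ?thesis by (simp add: divide_inverse)
      qed
      ultimately have "inverse (\<bar>v\<bar> powr \<alpha>) * G v \<le> K" by simp
      then have "G v \<le> K * \<bar>v\<bar> powr \<alpha>" using av by (intro inv_aux) auto
      also have "\<dots> \<le> K * (\<bar>v\<bar> powr \<alpha> + \<bar>v\<bar> powr \<beta>)" using K0 by (intro mult_left_mono) auto
      finally show ?thesis by (simp add: K_def)
    qed
  qed
qed


lemma deriv_upper:
  fixes f :: "real \<Rightarrow> real"
  assumes D: "(f has_real_derivative Q) (at 0)"
    and le: "\<And>t. 0 < t \<Longrightarrow> t \<le> 1 \<Longrightarrow> f t \<le> (1 + t) powr \<beta> * f 0"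
  shows "Q \<le> \<beta> * f 0"
proof -
  have L1: "((\<lambda>h. (f (0 + h) - f 0) / h) \<longlongrightarrow> Q) (at_right 0)"
    using D unfolding DERIV_def filterlim_at_split by blast
  have D2: "((\<lambda>h. (1 + h) powr \<beta>) has_real_derivative \<beta>) (at 0)"
  proof -
    have d1: "((\<lambda>h. 1 + h) has_real_derivative 1) (at (0::real))"
      by (auto intro!: derivative_eq_intros)
    have "((\<lambda>h. (1 + h) powr \<beta>) has_real_derivative \<beta> * (1 + 0) powr (\<beta> - of_nat 1) * 1) (at 0)"
      by (rule DERIV_fun_powr[OF d1]) simp
    then show ?thesis by simp
  qed
  have L2': "((\<lambda>h. ((1 + (0 + h)) powr \<beta> - (1 + 0) powr \<beta>) / h) \<longlongrightarrow> \<beta>) (at_right 0)"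
    using D2 unfolding DERIV_def filterlim_at_split by blast
  have L2: "((\<lambda>h. ((1 + h) powr \<beta> - 1) / h * f 0) \<longlongrightarrow> \<beta> * f 0) (at_right 0)"
    using tendsto_mult_right[OF L2', of "f 0"] by simp
  have ev: "eventually (\<lambda>h. (f (0 + h) - f 0) / h \<le> ((1 + h) powr \<beta> - 1) / h * f 0) (at_right 0)"
    unfolding eventually_at_right[OF zero_less_one]
  proof (intro exI[of _ 1] conjI allI impI)
    fix h :: real assume h: "0 < h" "h < 1"
    have "f h - f 0 \<le> ((1 + h) powr \<beta> - 1) * f 0" using le[of h] h by (simp add: algebra_simps)
    then show "(f (0 + h) - f 0) / h \<le> ((1 + h) powr \<beta> - 1) / h * f 0"
      using h by (simp add: divide_right_mono[of _ _ h, simplified] field_simps)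
  qed simp
  show ?thesis by (rule tendsto_le[OF trivial_limit_at_right_real L2 L1 ev])
qed

lemma gag_scale:
  fixes u :: "'a::euclidean_space \<Rightarrow> real"
  assumes u[measurable]: "u \<in> borel_measurable lborel"
  shows "gagliardo_sq s (\<lambda>x. u x + t * u x) = ennreal ((1 + t)\<^sup>2) * gagliardo_sq s u"
proof -
  have "gagliardo_sq s (\<lambda>x. u x + t * u x) =
     (\<integral>\<^sup>+ p. ennreal ((1 + t)\<^sup>2) * ennreal ((u (fst p) - u (snd p))\<^sup>2 / norm (fst p - snd p) powr (real DIM('a) + 2 * s))
        \<partial>(lborel \<Otimes>\<^sub>M lborel))"
    unfolding gagliardo_sq_def
  proof (rule nn_integral_cong)
    fix p :: "'a \<times> 'a"
    have "(u (fst p) + t * u (fst p) - (u (snd p) + t * u (snd p)))\<^sup>2 = (1 + t)\<^sup>2 * (u (fst p) - u (snd p))\<^sup>2"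
      by (simp add: power2_eq_square algebra_simps)
    then show "ennreal ((u (fst p) + t * u (fst p) - (u (snd p) + t * u (snd p)))\<^sup>2 / norm (fst p - snd p) powr (real DIM('a) + 2 * s))
      = ennreal ((1 + t)\<^sup>2) * ennreal ((u (fst p) - u (snd p))\<^sup>2 / norm (fst p - snd p) powr (real DIM('a) + 2 * s))"
      by (simp add: ennreal_mult[symmetric] del: ennreal_mult')
  qed
  also have "\<dots> = ennreal ((1 + t)\<^sup>2) * gagliardo_sq s u"
    unfolding gagliardo_sq_def by (rule nn_integral_cmult) measurable
  finally show ?thesis .
qed


lemma Gprim_meas:
  assumes gd: "\<And>x. (Gprim g has_real_derivative g x) (at x)"
  shows "Gprim g \<in> borel_measurable borel"
proof -
  have "continuous_on UNIV (Gprim g)"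
    by (intro continuous_at_imp_continuous_on ballI DERIV_isCont[OF gd])
  then show ?thesis by (rule borel_measurable_continuous_onI)
qed

lemma crit_ineq:
  fixes u :: "'a::euclidean_space \<Rightarrow> real" and g :: "real \<Rightarrow> real"
  assumes gd: "\<And>x. (Gprim g has_real_derivative g x) (at x)"
    and ab: "0 < \<alpha>" "\<alpha> < \<beta>"
    and H: "\<And>s. \<alpha> * Gprim g s \<le> g s * s \<and> g s * s \<le> \<beta> * Gprim g s"
    and cp: "critical_point s1 s2 g lam u"
  shows "enn2real (gagliardo_sq s1 u) + enn2real (gagliardo_sq s2 u) + lam * (\<integral>x. (u x)\<^sup>2 \<partial>lborel)
     \<le> \<beta> * (\<integral>x. Gprim g (u x) \<partial>lborel)"
proof -
  have uH: "u \<in> Hspace s1 s2" using cp unfolding critical_point_def by blast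
  have D0: "((\<lambda>t. Ilam s1 s2 g lam (\<lambda>x. u x + t * u x)) has_real_derivative 0) (at 0)"
    using cp uH unfolding critical_point_def by blast
  have u[measurable]: "u \<in> borel_measurable lborel" using uH unfolding Hspace_def by blast
  have Gm[measurable]: "Gprim g \<in> borel_measurable borel" by (rule Gprim_meas[OF gd])
  define Q where "Q = enn2real (gagliardo_sq s1 u) + enn2real (gagliardo_sq s2 u) + lam * (\<integral>x. (u x)\<^sup>2 \<partial>lborel)"
  define f where "f = (\<lambda>t. \<integral>x. Gprim g ((1 + t) * u x) \<partial>lborel)"
  have Ieq: "Ilam s1 s2 g lam (\<lambda>x. u x + t * u x) = (1 + t)\<^sup>2 * Q / 2 - f t" for t
  proof -
    have e1: "enn2real (gagliardo_sq s (\<lambda>x. u x + t * u x)) = (1 + t)\<^sup>2 * enn2real (gagliardo_sq s u)" for s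
      unfolding gag_scale[OF u] enn2real_mult by simp
    have e2: "(\<integral>x. (u x + t * u x)\<^sup>2 \<partial>lborel) = (1 + t)\<^sup>2 * (\<integral>x. (u x)\<^sup>2 \<partial>lborel)"
    proof -
      have "(\<lambda>x. (u x + t * u x)\<^sup>2) = (\<lambda>x. (1 + t)\<^sup>2 * (u x)\<^sup>2)"
        by (simp add: fun_eq_iff power2_eq_square algebra_simps)
      then show ?thesis by simp
    qed
    have e3: "(\<lambda>x. Gprim g (u x + t * u x)) = (\<lambda>x. Gprim g ((1 + t) * u x))"
      by (simp add: fun_eq_iff algebra_simps)
    show ?thesis unfolding Ilam_def e1 e2 e3 f_def Q_def by (simp add: algebra_simps)
  qed
  have Df: "(f has_real_derivative Q) (at 0)"
  proof -
    have fe: "f = (\<lambda>t. (1 + t)\<^sup>2 * Q / 2 - Ilam s1 s2 g lam (\<lambda>x. u x + t * u x))"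
      using Ieq by (simp add: fun_eq_iff)
    have d1: "((\<lambda>t. (1 + t)\<^sup>2 * Q / 2) has_real_derivative Q) (at 0)"
    proof -
      have "((\<lambda>t::real. (1 + t)\<^sup>2 * Q / 2) has_real_derivative (2 * (1 + 0) ^ 1 * 1) * Q / 2) (at 0)"
        by (auto intro!: derivative_eq_intros)
      then show ?thesis by simp
    qed
    show ?thesis unfolding fe using DERIV_diff[OF d1 D0] by simp
  qed
  have Gnn: "Gprim g x \<ge> 0" for x by (rule G_nonneg[OF ab(2) H])
  have le: "f t \<le> (1 + t) powr \<beta> * f 0" if t: "0 < t" "t \<le> 1" for t
  proof -
    define c where "c = 1 + t"
    have c: "c \<ge> 1" unfolding c_def using t by simp
    have p1: "Gprim g (c * v) \<le> c powr \<beta> * Gprim g v" for v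
      by (rule G_scale(1)[OF gd ab(1) less_imp_le[OF ab(2)] H c])
    have p2: "Gprim g v \<le> Gprim g (c * v)" for v
    proof -
      have "1 \<le> c powr \<alpha>" using c ab by (simp add: ge_one_powr_ge_zero)
      then have "Gprim g v \<le> c powr \<alpha> * Gprim g v" using Gnn[of v] by (simp add: mult_le_cancel_right1)
      also have "\<dots> \<le> Gprim g (c * v)" by (rule G_scale(2)[OF gd ab(1) less_imp_le[OF ab(2)] H c])
      finally show ?thesis .
    qed
    have f0: "f 0 = (\<integral>x. Gprim g (u x) \<partial>lborel)" unfolding f_def by simp
    show ?thesis
    proof (cases "integrable lborel (\<lambda>x. Gprim g (u x))")
      case True
      have I2: "integrable lborel (\<lambda>x. c powr \<beta> * Gprim g (u x))" using True by simp
      have I3: "integrable lborel (\<lambda>x. Gprim g (c * u x))"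
        by (rule Bochner_Integration.integrable_bound[OF I2]) (use p1 Gnn in \<open>auto simp: abs_of_nonneg\<close>)
      have "f t = (\<integral>x. Gprim g (c * u x) \<partial>lborel)" unfolding f_def c_def by simp
      also have "\<dots> \<le> (\<integral>x. c powr \<beta> * Gprim g (u x) \<partial>lborel)"
        by (rule integral_mono[OF I3 I2 p1])
      also have "\<dots> = c powr \<beta> * f 0" unfolding f0 by simp
      finally show ?thesis unfolding c_def .
    next
      case False
      have "\<not> integrable lborel (\<lambda>x. Gprim g (c * u x))"
      proof
        assume "integrable lborel (\<lambda>x. Gprim g (c * u x))"
        then have "integrable lborel (\<lambda>x. Gprim g (u x))"
          by (rule Bochner_Integration.integrable_bound) (use p2 Gnn in \<open>auto simp: abs_of_nonneg\<close>)
        with False show False by simp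
      qed
      then have "f t = 0" unfolding f_def c_def by (simp add: not_integrable_integral_eq)
      moreover have "f 0 = 0" unfolding f0 using False by (simp add: not_integrable_integral_eq)
      ultimately show ?thesis by simp
    qed
  qed
  have "Q \<le> \<beta> * f 0" by (rule deriv_upper[OF Df le])
  then show ?thesis unfolding Q_def f_def by simp
qed


lemma final_arith:
  fixes Q \<alpha> \<beta> c0 D Aa Ab :: real
  assumes Q: "Q > 0" and a: "2 < \<alpha>" "\<alpha> < \<beta>" and c0: "c0 \<ge> 1" and D: "D \<ge> 0"
    and Aa: "Aa > 0" and Ab: "Ab > 0"
    and ineq: "Q \<le> D * (Aa * (c0 * Q) powr (\<alpha> / 2) + Ab * (c0 * Q) powr (\<beta> / 2))"
  shows "Q \<ge> (1 / max 1 (D * (Aa * c0 powr (\<alpha> / 2) + Ab * c0 powr (\<beta> / 2)))) powr (1 / (\<alpha> / 2 - 1))"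
proof -
  define E where "E = max 1 (D * (Aa * c0 powr (\<alpha> / 2) + Ab * c0 powr (\<beta> / 2)))"
  define e where "e = \<alpha> / 2 - 1"
  have E1: "E \<ge> 1" unfolding E_def by simp
  have e: "e > 0" unfolding e_def using a by simp
  have M1: "(1 / E) powr (1 / e) \<le> 1" using E1 e by (intro powr_le1) auto
  show ?thesis
  proof (cases "Q \<ge> 1")
    case True then show ?thesis using M1 unfolding E_def e_def by linarith
  next
    case False
    have qb: "Q powr (\<beta> / 2) \<le> Q powr (\<alpha> / 2)" using False Q a by (intro powr_mono') auto
    have "Q \<le> D * (Aa * (c0 powr (\<alpha> / 2) * Q powr (\<alpha> / 2)) + Ab * (c0 powr (\<beta> / 2) * Q powr (\<beta> / 2)))"
      using ineq c0 Q by (simp add: powr_mult)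
    also have "\<dots> \<le> D * (Aa * (c0 powr (\<alpha> / 2) * Q powr (\<alpha> / 2)) + Ab * (c0 powr (\<beta> / 2) * Q powr (\<alpha> / 2)))"
      using qb D Ab by (intro mult_left_mono add_left_mono) auto
    also have "\<dots> = (D * (Aa * c0 powr (\<alpha> / 2) + Ab * c0 powr (\<beta> / 2))) * Q powr (\<alpha> / 2)"
      by (simp add: algebra_simps)
    also have "\<dots> \<le> E * Q powr (\<alpha> / 2)" unfolding E_def by (intro mult_right_mono) auto
    also have "Q powr (\<alpha> / 2) = Q * Q powr e"
      unfolding e_def using Q by (simp add: powr_mult_base)
    finally have "Q * 1 \<le> Q * (E * Q powr e)" by (simp add: mult_ac)
    then have "1 \<le> E * Q powr e" using Q by (simp only: mult_le_cancel_left_pos)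
    then have "1 / E \<le> Q powr e" using E1 by (simp add: field_simps)
    then have "(1 / E) powr (1 / e) \<le> (Q powr e) powr (1 / e)" using E1 e by (intro powr_mono2) auto
    also have "(Q powr e) powr (1 / e) = Q" using e Q by (simp add: powr_powr)
    finally show ?thesis unfolding E_def e_def .
  qed
qed


lemma Lp_int:
  fixes u :: "'a::euclidean_space \<Rightarrow> real"
  assumes u[measurable]: "u \<in> borel_measurable lborel"
    and N: "(\<integral>\<^sup>+x. ennreal (\<bar>u x\<bar> powr r) \<partial>lborel) \<le> ennreal C" and C: "C \<ge> 0"
  shows "integrable lborel (\<lambda>x. \<bar>u x\<bar> powr r)" and "(\<integral>x. \<bar>u x\<bar> powr r \<partial>lborel) \<le> C"
proof -
  show I: "integrable lborel (\<lambda>x. \<bar>u x\<bar> powr r)"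
  proof (rule integrableI_bounded)
    show "(\<integral>\<^sup>+x. ennreal (norm (\<bar>u x\<bar> powr r)) \<partial>lborel) < \<infinity>"
      using N by (simp add: le_less_trans[OF _ ennreal_less_top])
  qed measurable
  have "ennreal (\<integral>x. \<bar>u x\<bar> powr r \<partial>lborel) = (\<integral>\<^sup>+x. ennreal (\<bar>u x\<bar> powr r) \<partial>lborel)"
    by (rule nn_integral_eq_integral[OF I, symmetric]) auto
  with N have "ennreal (\<integral>x. \<bar>u x\<bar> powr r \<partial>lborel) \<le> ennreal C" by simp
  then show "(\<integral>x. \<bar>u x\<bar> powr r \<partial>lborel) \<le> C" using C by (simp add: ennreal_le_iff)
qed

theorem lemma3p8:
  fixes s1 s2 lam :: real and g :: "real \<Rightarrow> real"
  assumes "0 < s1" "s1 < s2" "s2 < 1"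
    and "2 * s1 < real DIM('a::euclidean_space)"
    and "real DIM('a) < 2 * s1 * s2 / (s2 - s1)"
    and G1: "continuous_on UNIV g" "\<And>s. g (- s) = - g s"
    and G23: "\<exists>\<alpha> \<beta>. 2 + 4 * s2 / real DIM('a) < \<alpha> \<and> \<alpha> < \<beta>
               \<and> \<beta> < 2 * real DIM('a) / (real DIM('a) - 2 * s1)
               \<and> (\<forall>s. \<alpha> * Gprim g s \<le> g s * s \<and> g s * s \<le> \<beta> * Gprim g s)
               \<and> (\<forall>s. Gtilde g differentiable (at s) \<and> deriv (Gtilde g) s * s \<ge> \<alpha> * Gtilde g s)"
    and "0 < lam"
  shows "\<exists>M>0. \<forall>u :: 'a \<Rightarrow> real. critical_point s1 s2 g lam u \<and> \<not> (AE x in lborel. u x = 0)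
            \<longrightarrow> Hnorm s1 s2 u \<ge> M"
proof -
  obtain \<alpha> \<beta> where a1: "2 + 4 * s2 / real DIM('a) < \<alpha>" and ab: "\<alpha> < \<beta>"
    and b1: "\<beta> < 2 * real DIM('a) / (real DIM('a) - 2 * s1)"
    and H: "\<And>s. \<alpha> * Gprim g s \<le> g s * s \<and> g s * s \<le> \<beta> * Gprim g s"
    using G23 by blast
  have s1: "s1 > 0" using assms(1) .
  have sd: "2 * s1 < real DIM('a)" using assms(4) .
  have lam: "lam > 0" using \<open>0 < lam\<close> by simp
  have a2: "\<alpha> > 2"
  proof -
    have "4 * s2 / real DIM('a) > 0" using assms(1,2) by simp
    then show ?thesis using a1 by linarith
  qed
  have a0: "\<alpha> > 0" using a2 by simp
  have gd: "\<And>x. (Gprim g has_real_derivative g x) (at x)" by (rule Gprim_deriv[OF G1(1)])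
  have "goodp (TYPE('a)) s1 \<alpha>" using goodp_all[OF s1 sd, of \<alpha>] a2 ab b1 by simp
  then obtain Aa where Aa: "Aa > 0" and NA: "\<And>(u::'a \<Rightarrow> real) B. u \<in> borel_measurable lborel \<Longrightarrow> B > 0 \<Longrightarrow>
        (\<integral>\<^sup>+x. ennreal (\<bar>u x\<bar> powr 2) \<partial>lborel) \<le> ennreal B \<Longrightarrow> gagliardo_sq s1 u \<le> ennreal B \<Longrightarrow>
        (\<integral>\<^sup>+x. ennreal (\<bar>u x\<bar> powr \<alpha>) \<partial>lborel) \<le> ennreal (Aa * B powr (\<alpha> / 2))"
    unfolding goodp_def by blast
  have "goodp (TYPE('a)) s1 \<beta>" using goodp_all[OF s1 sd, of \<beta>] a2 ab b1 by simp
  then obtain Ab where Ab: "Ab > 0" and NB: "\<And>(u::'a \<Rightarrow> real) B. u \<in> borel_measurable lborel \<Longrightarrow> B > 0 \<Longrightarrow>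
        (\<integral>\<^sup>+x. ennreal (\<bar>u x\<bar> powr 2) \<partial>lborel) \<le> ennreal B \<Longrightarrow> gagliardo_sq s1 u \<le> ennreal B \<Longrightarrow>
        (\<integral>\<^sup>+x. ennreal (\<bar>u x\<bar> powr \<beta>) \<partial>lborel) \<le> ennreal (Ab * B powr (\<beta> / 2))"
    unfolding goodp_def by blast
  define K where "K = max (Gprim g 1) (Gprim g (-1))"
  have Gnn: "Gprim g x \<ge> 0" for x by (rule G_nonneg[OF ab H])
  have K0: "K \<ge> 0" unfolding K_def using Gnn[of 1] by simp
  define c0 where "c0 = max 1 (1 / lam)"
  define L where "L = max 1 lam"
  define D where "D = \<beta> * K"
  define M1 where "M1 = (1 / max 1 (D * (Aa * c0 powr (\<alpha> / 2) + Ab * c0 powr (\<beta> / 2)))) powr (1 / (\<alpha> / 2 - 1))"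
  define M where "M = sqrt (M1 / L)"
  have c0: "c0 \<ge> 1" unfolding c0_def by simp
  have L: "L \<ge> 1" unfolding L_def by simp
  have D: "D \<ge> 0" unfolding D_def using K0 a0 ab by simp
  have M1: "M1 > 0" unfolding M1_def by simp
  have M: "M > 0" unfolding M_def using M1 L by simp
  show ?thesis
  proof (intro exI[of _ M] conjI allI impI M)
    fix u :: "'a \<Rightarrow> real"
    assume "critical_point s1 s2 g lam u \<and> \<not> (AE x in lborel. u x = 0)"
    then have cp: "critical_point s1 s2 g lam u" and nz: "\<not> (AE x in lborel. u x = 0)" by auto
    have uH: "u \<in> Hspace s1 s2" using cp unfolding critical_point_def by blast
    have u[measurable]: "u \<in> borel_measurable lborel" and I2: "integrable lborel (\<lambda>x. (u x)\<^sup>2)"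
      and g1: "gagliardo_sq s1 u < \<infinity>" and g2: "gagliardo_sq s2 u < \<infinity>"
      using uH unfolding Hspace_def by auto
    have Gm[measurable]: "Gprim g \<in> borel_measurable borel" by (rule Gprim_meas[OF gd])
    define S1 where "S1 = enn2real (gagliardo_sq s1 u)"
    define S2 where "S2 = enn2real (gagliardo_sq s2 u)"
    define N2 where "N2 = (\<integral>x. (u x)\<^sup>2 \<partial>lborel)"
    define Q where "Q = S1 + S2 + lam * N2"
    have S1: "S1 \<ge> 0" "S2 \<ge> 0" unfolding S1_def S2_def by auto
    have N2: "N2 > 0"
    proof -
      have "N2 \<ge> 0" unfolding N2_def by simp
      moreover have "N2 \<noteq> 0"
      proof
        assume "N2 = 0"
        then have "AE x in lborel. (u x)\<^sup>2 = 0"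
          using integral_nonneg_eq_0_iff_AE[OF I2] unfolding N2_def by simp
        then have "AE x in lborel. u x = 0" by simp
        with nz show False by simp
      qed
      ultimately show ?thesis by simp
    qed
    have Q: "Q > 0" unfolding Q_def using S1 N2 lam by (simp add: add_nonneg_pos)
    have crit: "Q \<le> \<beta> * (\<integral>x. Gprim g (u x) \<partial>lborel)"
      using crit_ineq[OF gd a0 ab H cp] unfolding Q_def S1_def S2_def N2_def .
    define B where "B = c0 * Q"
    have B: "B > 0" unfolding B_def using c0 Q by simp
    have QB: "Q \<le> B" unfolding B_def using c0 Q by simp
    have nb2: "(\<integral>\<^sup>+x. ennreal (\<bar>u x\<bar> powr 2) \<partial>lborel) \<le> ennreal B"
    proof -
      have "(\<integral>\<^sup>+x. ennreal (\<bar>u x\<bar> powr 2) \<partial>lborel) = (\<integral>\<^sup>+x. ennreal ((u x)\<^sup>2) \<partial>lborel)"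
        by (simp add: powr_numeral)
      also have "\<dots> = ennreal N2" unfolding N2_def by (rule nn_integral_eq_integral[OF I2]) auto
      also have "N2 \<le> B"
      proof -
        have "lam * N2 \<le> Q" unfolding Q_def using S1 by simp
        then have "N2 \<le> Q / lam" using lam by (simp add: field_simps)
        also have "Q / lam = (1 / lam) * Q" by simp
        also have "\<dots> \<le> c0 * Q" unfolding c0_def using Q by (intro mult_right_mono) auto
        finally show ?thesis unfolding B_def .
      qed
      then have "ennreal N2 \<le> ennreal B" by (rule ennreal_leI)
      finally show ?thesis .
    qed
    have gb: "gagliardo_sq s1 u \<le> ennreal B"
    proof -
      have "gagliardo_sq s1 u = ennreal S1" unfolding S1_def using g1 by simp
      moreover have "S1 \<le> B"
      proof -
        have "0 \<le> lam * N2" using N2 lam by simp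
        then show ?thesis using QB S1 unfolding Q_def by linarith
      qed
      ultimately show ?thesis by (simp add: ennreal_leI)
    qed
    have Ia: "integrable lborel (\<lambda>x. \<bar>u x\<bar> powr \<alpha>)" and Ja: "(\<integral>x. \<bar>u x\<bar> powr \<alpha> \<partial>lborel) \<le> Aa * B powr (\<alpha> / 2)"
      using Lp_int[OF u NA[OF u B nb2 gb]] Aa by auto
    have Ib: "integrable lborel (\<lambda>x. \<bar>u x\<bar> powr \<beta>)" and Jb: "(\<integral>x. \<bar>u x\<bar> powr \<beta> \<partial>lborel) \<le> Ab * B powr (\<beta> / 2)"
      using Lp_int[OF u NB[OF u B nb2 gb]] Ab by auto
    have Iab: "integrable lborel (\<lambda>x. K * (\<bar>u x\<bar> powr \<alpha> + \<bar>u x\<bar> powr \<beta>))"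
      using Ia Ib by simp
    have Gb: "Gprim g (u x) \<le> K * (\<bar>u x\<bar> powr \<alpha> + \<bar>u x\<bar> powr \<beta>)" for x
      unfolding K_def by (rule G_bound[OF gd a0 ab H])
    have IG: "integrable lborel (\<lambda>x. Gprim g (u x))"
    proof (rule Bochner_Integration.integrable_bound[OF Iab])
      show "AE x in lborel. norm (Gprim g (u x)) \<le> norm (K * (\<bar>u x\<bar> powr \<alpha> + \<bar>u x\<bar> powr \<beta>))"
      proof (intro AE_I2)
        fix x
        have "norm (Gprim g (u x)) = Gprim g (u x)" using Gnn by simp
        also have "\<dots> \<le> K * (\<bar>u x\<bar> powr \<alpha> + \<bar>u x\<bar> powr \<beta>)" by (rule Gb)
        also have "\<dots> \<le> norm (K * (\<bar>u x\<bar> powr \<alpha> + \<bar>u x\<bar> powr \<beta>))" by simp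
        finally show "norm (Gprim g (u x)) \<le> norm (K * (\<bar>u x\<bar> powr \<alpha> + \<bar>u x\<bar> powr \<beta>))" .
      qed
    qed measurable
    have "(\<integral>x. Gprim g (u x) \<partial>lborel) \<le> (\<integral>x. K * (\<bar>u x\<bar> powr \<alpha> + \<bar>u x\<bar> powr \<beta>) \<partial>lborel)"
      by (rule integral_mono[OF IG Iab Gb])
    also have "\<dots> = K * ((\<integral>x. \<bar>u x\<bar> powr \<alpha> \<partial>lborel) + (\<integral>x. \<bar>u x\<bar> powr \<beta> \<partial>lborel))"
      using Ia Ib by simp
    also have "\<dots> \<le> K * (Aa * B powr (\<alpha> / 2) + Ab * B powr (\<beta> / 2))"
      using Ja Jb K0 by (intro mult_left_mono add_mono) auto
    finally have "\<beta> * (\<integral>x. Gprim g (u x) \<partial>lborel) \<le> \<beta> * (K * (Aa * B powr (\<alpha> / 2) + Ab * B powr (\<beta> / 2)))"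
      using a0 ab by (intro mult_left_mono) auto
    with crit have "Q \<le> D * (Aa * (c0 * Q) powr (\<alpha> / 2) + Ab * (c0 * Q) powr (\<beta> / 2))"
      unfolding D_def B_def by (simp add: mult.assoc)
    then have QM: "M1 \<le> Q" unfolding M1_def by (rule final_arith[OF Q a2 ab c0 D Aa Ab])
    have "Q \<le> L * (S1 + S2 + N2)"
    proof -
      have "lam * N2 \<le> L * N2" unfolding L_def using N2 by (intro mult_right_mono) auto
      moreover have "S1 + S2 \<le> L * (S1 + S2)" using L S1 by (simp add: mult_le_cancel_right1)
      ultimately show ?thesis unfolding Q_def by (simp add: algebra_simps)
    qed
    then have "M1 / L \<le> S1 + S2 + N2" using QM L by (simp add: field_simps)
    then have "sqrt (M1 / L) \<le> sqrt (S1 + S2 + N2)" by (rule real_sqrt_le_mono)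
    then show "M \<le> Hnorm s1 s2 u" unfolding M_def Hnorm_def S1_def S2_def N2_def .
  qed
qed

end
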